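(* For every finite subset $B\subseteq A$ and every $c\in A\setminus\mathrm{Cl}(B)$, there exists a permutation $\pi\in\mathcal{G}$ that fixes $B$ pointwise and satisfies $\pi(c)\neq c$.
   Context: Let $\langle P,\preccurlyeq,\preccurlyeq^\ast\rangle$ be a doubly ordered set: $\preccurlyeq$ a partial order on $P$, $\preccurlyeq^\ast$ a preorder on $P$, and $p\preccurlyeq q\Rightarrow p\preccurlyeq^\ast q$. Write $p\prec q$ for ($p\preccurlyeq q$ and $p\neq q$). For a quadruple $\langle x_0,x_1,x_2,x_3\rangle$ and $i<4$, $\mathrm{pr}_i(\langle x_0,x_1,x_2,x_3\rangle)=x_i$. For a set $S$, $\mathscr{S}(S)$ is the set of permutations of $S$. Define recursively $A_0=\{\langle0,p,\varnothing,k\rangle\mid p\in P,k\in\omega\}$ and $A_{n+1}=A_n\cup\{\langle n+1,q,a,0\rangle\mid q\in P,a\in A_n,\mathrm{pr}_1(a)\prec q\}\cup\{\langle n+1,q,a,k\rangle\mid q\in P,a\in A_n,\mathrm{pr}_1(a)\not\preccurlyeq q,\mathrm{pr}_1(a)\preccurlyeq^\ast q,k\in\omega\}$; let $A=\bigcup_{n}A_n$. Define $\mathcal{G}_0=\{f\in\mathscr{S}(A_0)\mid \mathrm{pr}_1(f(a))=\mathrm{pr}_1(a)\text{ for all }a\in A_0\}$; for $f\in\mathscr{S}(A_{n+1})$, $f\in\mathcal{G}_{n+1}$ iff $f{\upharpoonright}A_n\in\mathcal{G}_n$ and for all $b\in A_{n+1}\setminus A_n$, $\mathrm{pr}_1(f(b))=\mathrm{pr}_1(b)$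 and $\mathrm{pr}_2(f(b))=f(\mathrm{pr}_2(b))$. Let $\mathcal{G}=\{\pi\in\mathscr{S}(A)\mid \pi{\upharpoonright}A_n\in\mathcal{G}_n\text{ for all }n\}$. A subset $C\subseteq A$ is closed if (i) for all $n\in\omega$, all $a\in C\cap A_n$ and all $q\in P$ with $\mathrm{pr}_1(a)\prec q$, we have $\langle n+1,q,a,0\rangle\in C$, and (ii) for all $b\in C\setminus A_0$, $\mathrm{pr}_2(b)\in C$. For $B\subseteq A$, $\mathrm{Cl}(B)$ is the least closed subset of $A$ including $B$. *)

theory Defs
  imports Main
begin

text \<open>Quadruples <n, p, a, k>; the third component is either the empty set
  (encoded as None) or an element a of A (encoded as Some a).\<close>
datatype 'p quad = Quad nat 'p "'p quad option" nat

fun pr0 :: "'p quad \<Rightarrow> nat" where "pr0 (Quad n p a k) = n"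
fun pr1 :: "'p quad \<Rightarrow> 'p" where "pr1 (Quad n p a k) = p"
fun pr2 :: "'p quad \<Rightarrow> 'p quad option" where "pr2 (Quad n p a k) = a"
fun pr3 :: "'p quad \<Rightarrow> nat" where "pr3 (Quad n p a k) = k"

definition strict :: "('p \<Rightarrow> 'p \<Rightarrow> bool) \<Rightarrow> 'p \<Rightarrow> 'p \<Rightarrow> bool" where
  "strict le p q \<longleftrightarrow> le p q \<and> p \<noteq> q"

fun An :: "('p \<Rightarrow> 'p \<Rightarrow> bool) \<Rightarrow> ('p \<Rightarrow> 'p \<Rightarrow> bool) \<Rightarrow> nat \<Rightarrow> 'p quad set" where
  "An le les 0 = {Quad 0 p None k | p k. True}"
| "An le les (Suc n) = An le les n
     \<union> {Quad (Suc n) q (Some a) 0 | q a. a \<in> An le les n \<and> strict le (pr1 a) q}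
     \<union> {Quad (Suc n) q (Some a) k | q a k. a \<in> An le les n \<and> \<not> le (pr1 a) q \<and> les (pr1 a) q}"

definition Aall :: "('p \<Rightarrow> 'p \<Rightarrow> bool) \<Rightarrow> ('p \<Rightarrow> 'p \<Rightarrow> bool) \<Rightarrow> 'p quad set" where
  "Aall le les = (\<Union>n. An le les n)"

text \<open>Membership of (the restriction of) f in G_n. A permutation of a set S is
  represented by a function f with bij_betw f S S (values outside S irrelevant).\<close>
fun Gn :: "('p \<Rightarrow> 'p \<Rightarrow> bool) \<Rightarrow> ('p \<Rightarrow> 'p \<Rightarrow> bool) \<Rightarrow> nat \<Rightarrow> ('p quad \<Rightarrow> 'p quad) \<Rightarrow> bool" where
  "Gn le les 0 f \<longleftrightarrow> bij_betw f (An le les 0) (An le les 0)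
      \<and> (\<forall>a\<in>An le les 0. pr1 (f a) = pr1 a)"
| "Gn le les (Suc n) f \<longleftrightarrow> bij_betw f (An le les (Suc n)) (An le les (Suc n))
      \<and> Gn le les n f
      \<and> (\<forall>b\<in>An le les (Suc n) - An le les n.
            pr1 (f b) = pr1 b \<and> pr2 (f b) = map_option f (pr2 b))"

definition Gall :: "('p \<Rightarrow> 'p \<Rightarrow> bool) \<Rightarrow> ('p \<Rightarrow> 'p \<Rightarrow> bool) \<Rightarrow> ('p quad \<Rightarrow> 'p quad) \<Rightarrow> bool" where
  "Gall le les \<pi> \<longleftrightarrow> bij_betw \<pi> (Aall le les) (Aall le les) \<and> (\<forall>n. Gn le les n \<pi>)"

definition closed_set :: "('p \<Rightarrow> 'p \<Rightarrow> bool) \<Rightarrow> ('p \<Rightarrow> 'p \<Rightarrow> bool) \<Rightarrow> 'p quad set \<Rightarrow> bool" where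
  "closed_set le les C \<longleftrightarrow> C \<subseteq> Aall le les
     \<and> (\<forall>n. \<forall>a\<in>C \<inter> An le les n. \<forall>q. strict le (pr1 a) q \<longrightarrow> Quad (Suc n) q (Some a) 0 \<in> C)
     \<and> (\<forall>b\<in>C - An le les 0. case pr2 b of Some a \<Rightarrow> a \<in> C | None \<Rightarrow> False)"

definition Cl :: "('p \<Rightarrow> 'p \<Rightarrow> bool) \<Rightarrow> ('p \<Rightarrow> 'p \<Rightarrow> bool) \<Rightarrow> 'p quad set \<Rightarrow> 'p quad set" where
  "Cl le les B = \<Inter>{C. closed_set le les C \<and> B \<subseteq> C}"

end

theory Submission
  imports Defs
begin
fun inA :: "('p \<Rightarrow> 'p \<Rightarrow> bool) \<Rightarrow> ('p \<Rightarrow> 'p \<Rightarrow> bool) \<Rightarrow> 'p quad \<Rightarrow> bool" where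
  "inA le les (Quad 0 p None k) = True"
| "inA le les (Quad (Suc n) q (Some a) k) = (inA le les a \<and> pr0 a \<le> n \<and>
     ((k = 0 \<and> strict le (pr1 a) q) \<or> (\<not> le (pr1 a) q \<and> les (pr1 a) q)))"
| "inA le les _ = False"
primrec sw :: "'p quad \<Rightarrow> 'p quad \<Rightarrow> 'p quad \<Rightarrow> 'p quad" where
  "sw u v (Quad n p a k) = (if Quad n p a k = u then v else if Quad n p a k = v then u
      else Quad n p (map_option (sw u v) a) k)"

lemma sw_pr0: "pr0 u = pr0 v \<Longrightarrow> pr0 (sw u v x) = pr0 x"
  by (cases x) (simp only: sw.simps split: if_split, metis pr0.simps)
lemma sw_pr1: "pr1 u = pr1 v \<Longrightarrow> pr1 (sw u v x) = pr1 x"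
  by (cases x) (simp only: sw.simps split: if_split, metis pr1.simps)

lemma An_iff: "x \<in> An le les m \<longleftrightarrow> inA le les x \<and> pr0 x \<le> m"
proof (induction m arbitrary: x)
  case 0
  then show ?case by (cases x) (auto elim: inA.elims)
next
  case (Suc m)
  show ?case
  proof
    assume "x \<in> An le les (Suc m)"
    then consider "x \<in> An le les m"
      | q a where "x = Quad (Suc m) q (Some a) 0" "a \<in> An le les m" "strict le (pr1 a) q"
      | q a k where "x = Quad (Suc m) q (Some a) k" "a \<in> An le les m" "\<not> le (pr1 a) q" "les (pr1 a) q"
      by (simp only: An.simps Un_iff mem_Collect_eq) blast
    then show "inA le les x \<and> pr0 x \<le> Suc m"
    proof cases
      case 1 then show ?thesis using Suc by simp
    next
      case 2 then show ?thesis using Suc.IH[of a] by simp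
    next
      case 3 then show ?thesis using Suc.IH[of a] by simp
    qed
  next
    assume h: "inA le les x \<and> pr0 x \<le> Suc m"
    show "x \<in> An le les (Suc m)"
    proof (cases "pr0 x \<le> m")
      case True then show ?thesis using Suc h by auto
    next
      case False
      then have "pr0 x = Suc m" using h by auto
      then obtain q a k where x: "x = Quad (Suc m) q (Some a) k" "inA le les a" "pr0 a \<le> m"
        "(k = 0 \<and> strict le (pr1 a) q) \<or> (\<not> le (pr1 a) q \<and> les (pr1 a) q)"
        using h by (cases "(le, les, x)" rule: inA.cases) auto
      then show ?thesis using Suc by auto
    qed
  qed
qed
fun anc :: "'p quad \<Rightarrow> 'p quad set" where
  "anc (Quad n p None k) = {Quad n p None k}"
| "anc (Quad n p (Some a) k) = insert (Quad n p (Some a) k) (anc a)"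

fun depth :: "'p quad \<Rightarrow> nat" where
  "depth (Quad n p None k) = 0"
| "depth (Quad n p (Some a) k) = Suc (depth a)"

lemma Aall_iff: "x \<in> Aall le les \<longleftrightarrow> inA le les x"
  unfolding Aall_def by (auto simp: An_iff)

lemma finite_anc: "finite (anc x)"
  by (induction x rule: anc.induct) auto

lemma self_anc: "x \<in> anc x"
  by (cases x rule: anc.cases) auto

lemma depth_anc: "y \<in> anc x \<Longrightarrow> depth y \<le> depth x"
  by (induction x rule: anc.induct) auto

lemma sw_id: "u \<notin> anc x \<Longrightarrow> v \<notin> anc x \<Longrightarrow> sw u v x = x"
proof (induction x rule: anc.induct)
  case (1 n p k) then show ?case by auto
next
  case (2 n p a k) then show ?case by auto
qed

lemma sw_pr2:
  assumes "pr2 u = pr2 v" "map_option (sw u v) (pr2 u) = pr2 u"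
  shows "pr2 (sw u v x) = map_option (sw u v) (pr2 x)"
  using assms by (cases x) (simp only: sw.simps split: if_split, metis pr2.simps)

lemma sw_Quad: "Quad n p a k \<noteq> u \<Longrightarrow> Quad n p a k \<noteq> v \<Longrightarrow>
  sw u v (Quad n p a k) = Quad n p (map_option (sw u v) a) k" by simp
lemma sw_u: "sw u v u = v" by (cases u) simp
lemma sw_v: "u \<noteq> v \<Longrightarrow> sw u v v = u" by (cases v) simp

lemma sw_inA:
  assumes "inA le les u" "inA le les v" "pr0 u = pr0 v" "pr1 u = pr1 v"
  shows "inA le les x \<Longrightarrow> inA le les (sw u v x)"
proof (induction x)
  case (Quad n p a k)
  show ?case
  proof (cases "Quad n p a k = u \<or> Quad n p a k = v")
    case True
    then have "sw u v (Quad n p a k) = u \<or> sw u v (Quad n p a k) = v"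
      by (metis sw_u sw_v)
    then show ?thesis using assms(1,2) by metis
  next
    case False
    then have e: "sw u v (Quad n p a k) = Quad n p (map_option (sw u v) a) k"
      using False by (intro sw_Quad) auto
    show ?thesis unfolding e using Quad.IH Quad.prems
      by (cases n; cases a) (auto simp: sw_pr0[OF assms(3)] sw_pr1[OF assms(4)])
  qed
qed

lemma sw_inv:
  assumes "u \<noteq> v" "pr2 u = pr2 v" "pr0 u = pr0 v" "pr1 u = pr1 v" "pr3 u \<noteq> pr3 v"
    "map_option (sw u v) (pr2 u) = pr2 u"
  shows "sw u v (sw u v x) = x"
proof (induction x)
  case (Quad n p a k)
  show ?case
  proof (cases "Quad n p a k = u \<or> Quad n p a k = v")
    case True then show ?thesis by (metis sw_u sw_v assms(1))
  next
    case False
    have ia: "map_option (sw u v) (map_option (sw u v) a) = a"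
      using Quad by (cases a) auto
    have ne: "Quad n p (map_option (sw u v) a) k \<noteq> u \<and> Quad n p (map_option (sw u v) a) k \<noteq> v"
    proof (rule ccontr)
      assume "\<not> ?thesis"
      then obtain w where w: "w = u \<or> w = v" "Quad n p (map_option (sw u v) a) k = w" by blast
      then have "map_option (sw u v) a = pr2 w" by (metis pr2.simps)
      then have "map_option (sw u v) (map_option (sw u v) a) = map_option (sw u v) (pr2 w)" by simp
      then have "a = pr2 w" using ia assms w(1) by auto
      then have "Quad n p a k = w" using w by (cases w) auto
      then show False using False w(1) by auto
    qed
    show ?thesis using False ne ia by simp
  qed
qed

lemma sw_moves:
  assumes "u \<noteq> v"
  shows "u \<in> anc x \<Longrightarrow> sw u v x \<noteq> x"
proof (induction x rule: anc.induct)
  case (1 n p k) then show ?case using assms by auto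
next
  case (2 n p a k) then show ?case using assms by auto
qed

lemma Gall_of:
  assumes inv: "\<And>x. f (f x) = x"
    and pres: "\<And>x. inA le les x \<Longrightarrow> inA le les (f x)"
    and p0: "\<And>x. pr0 (f x) = pr0 x" and p1: "\<And>x. pr1 (f x) = pr1 x"
    and p2: "\<And>x. pr2 (f x) = map_option f (pr2 x)"
  shows "Gall le les f"
proof -
  have bij: "bij_betw f S S" if "\<And>x. x \<in> S \<Longrightarrow> f x \<in> S" for S
  proof -
    have "inj_on f S" by (metis inj_onI inv)
    moreover have "f ` S = S"
    proof
      show "f ` S \<subseteq> S" using that by auto
      show "S \<subseteq> f ` S" using that inv by (metis image_eqI subsetI)
    qed
    ultimately show ?thesis by (simp add: bij_betw_def)
  qed
  have bA: "bij_betw f (An le les n) (An le les n)" for n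
    by (rule bij) (simp add: An_iff pres p0)
  have "Gn le les n f" for n
  proof (induction n)
    case 0 show ?case unfolding Gn.simps using bA[of 0] p1 by blast
  next
    case (Suc n) show ?case unfolding Gn.simps using bA[of "Suc n"] Suc.IH p1 p2 by blast
  qed
  moreover have "bij_betw f (Aall le les) (Aall le les)"
    by (rule bij) (simp add: Aall_iff pres)
  ultimately show ?thesis by (simp add: Gall_def)
qed

lemma closed_anc:
  assumes "closed_set le les C"
  shows "x \<in> C \<Longrightarrow> anc x \<subseteq> C"
proof (induction x rule: anc.induct)
  case (1 n p k) then show ?case by auto
next
  case (2 n p a k)
  then have "inA le les (Quad n p (Some a) k)" using assms by (auto simp: closed_set_def Aall_iff)
  then obtain m where "n = Suc m" by (cases n) auto
  then have "Quad n p (Some a) k \<notin> An le les 0" by auto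
  then have "a \<in> C" using 2(2) assms unfolding closed_set_def by force
  then show ?case using 2 by auto
qed

lemma find_w:
  assumes "closed_set le les C"
  shows "inA le les x \<Longrightarrow> x \<notin> C \<Longrightarrow> \<exists>w\<in>anc x. w \<notin> C \<and> inA le les w \<and>
     (pr2 w = None \<or> (\<exists>a. pr2 w = Some a \<and> a \<in> C))"
proof (induction x rule: anc.induct)
  case (1 n p k) then show ?case by auto
next
  case (2 n p a k)
  show ?case
  proof (cases "a \<in> C")
    case True then show ?thesis using 2 by auto
  next
    case False
    have "inA le les a" using 2(2) by (cases n) auto
    then show ?thesis using 2 False by auto
  qed
qed

theorem lemma2p4:
  fixes le :: "'p \<Rightarrow> 'p \<Rightarrow> bool" and les :: "'p \<Rightarrow> 'p \<Rightarrow> bool"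
    and B :: "'p quad set" and c :: "'p quad"
  assumes le_refl: "\<And>p. le p p"
    and le_antisym: "\<And>p q. le p q \<Longrightarrow> le q p \<Longrightarrow> p = q"
    and le_trans: "\<And>p q r. le p q \<Longrightarrow> le q r \<Longrightarrow> le p r"
    and les_refl: "\<And>p. les p p"
    and les_trans: "\<And>p q r. les p q \<Longrightarrow> les q r \<Longrightarrow> les p r"
    and le_les: "\<And>p q. le p q \<Longrightarrow> les p q"
    and B_fin: "finite B"
    and B_sub: "B \<subseteq> Aall le les"
    and c_mem: "c \<in> Aall le les - Cl le les B"
  shows "\<exists>\<pi>. Gall le les \<pi> \<and> (\<forall>b\<in>B. \<pi> b = b) \<and> \<pi> c \<noteq> c"
proof -
  obtain C where C: "closed_set le les C" "B \<subseteq> C" "c \<notin> C"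
    using c_mem unfolding Cl_def by auto
  have cA: "inA le les c" using c_mem by (simp add: Aall_iff)
  obtain w where w: "w \<in> anc c" "w \<notin> C" "inA le les w"
    "pr2 w = None \<or> (\<exists>a. pr2 w = Some a \<and> a \<in> C)"
    using find_w[OF C(1) cA C(3)] by blast
  obtain n q par k where wq: "w = Quad n q par k" by (cases w)
  have allk: "inA le les (Quad n q par k')" for k'
  proof (cases par)
    case None
    then have "n = 0" using w(3) wq by (cases n) auto
    then show ?thesis using None by simp
  next
    case (Some a)
    then have aC: "a \<in> C" using w(4) wq by auto
    obtain m where m: "n = Suc m" using w(3) wq Some by (cases n) auto
    have c1: "inA le les a" "pr0 a \<le> m"
      "(k = 0 \<and> strict le (pr1 a) q) \<or> (\<not> le (pr1 a) q \<and> les (pr1 a) q)"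
      using w(3) wq Some m by auto
    have "\<not> (k = 0 \<and> strict le (pr1 a) q)"
    proof
      assume h: "k = 0 \<and> strict le (pr1 a) q"
      have "a \<in> C \<inter> An le les m" using aC c1 by (simp add: An_iff)
      then have "Quad (Suc m) q (Some a) 0 \<in> C" using C(1) h unfolding closed_set_def by blast
      then show False using w(2) wq Some m h by simp
    qed
    then have "\<not> le (pr1 a) q \<and> les (pr1 a) q" using c1(3) by auto
    then show ?thesis using c1 Some m by simp
  qed
  define K where "K = insert k (pr3 ` (\<Union>b\<in>B. anc b))"
  have "finite K" unfolding K_def using B_fin finite_anc by auto
  then obtain k' where k': "k' \<notin> K" by (metis ex_new_if_finite infinite_UNIV_nat)
  define v where "v = Quad n q par k'"
  have kk: "k' \<noteq> k" using k' K_def by auto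
  have wv: "w \<noteq> v" using kk wq v_def by auto
  have ancB: "anc b \<subseteq> C" if "b \<in> B" for b using closed_anc[OF C(1)] C(2) that by auto
  have vB: "v \<notin> anc b" if "b \<in> B" for b
    using k' that unfolding K_def v_def by force
  have wB: "w \<notin> anc b" if "b \<in> B" for b using ancB[OF that] w(2) by auto
  have fixpar: "map_option (sw w v) (pr2 w) = pr2 w"
  proof (cases par)
    case None then show ?thesis using wq by simp
  next
    case (Some a)
    have "depth w = Suc (depth a)" "depth v = Suc (depth a)" using wq v_def Some by auto
    then have "w \<notin> anc a" "v \<notin> anc a" using depth_anc by fastforce+
    then show ?thesis using wq Some by (simp add: sw_id)
  qed
  have p0: "pr0 w = pr0 v" and p1: "pr1 w = pr1 v" and p2: "pr2 w = pr2 v" and p3: "pr3 w \<noteq> pr3 v"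
    using wq v_def kk by auto
  have G: "Gall le les (sw w v)"
  proof (rule Gall_of)
    show "sw w v (sw w v x) = x" for x by (rule sw_inv[OF wv p2 p0 p1 p3 fixpar])
    show "inA le les x \<Longrightarrow> inA le les (sw w v x)" for x
      by (rule sw_inA) (use w(3) allk v_def p0 p1 in auto)
    show "pr0 (sw w v x) = pr0 x" for x using sw_pr0[OF p0] .
    show "pr1 (sw w v x) = pr1 x" for x using sw_pr1[OF p1] .
    show "pr2 (sw w v x) = map_option (sw w v) (pr2 x)" for x using sw_pr2[OF p2 fixpar] .
  qed
  have "\<forall>b\<in>B. sw w v b = b" using sw_id wB vB by blast
  moreover have "sw w v c \<noteq> c" using sw_moves[OF wv w(1)] .
  ultimately show ?thesis using G by blast
qed

end
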